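(* Let $X \in \mathbb{R}^{n\times p}$, let $I \subset \{1,\ldots,p\}$ be an index set with complement $I^c = \{1,\ldots,p\}\setminus I$, and suppose $W \in \mathbb{R}^{p\times p}$ satisfies $W_{I^c} = 0$ (i.e., every row of $W$ with index in $I^c$ is zero). Then $$\|X - X W W^{+}\|_F > \|X - X^{I} (X^{I})^{+} X\|_F,$$ unless $\mathcal{L}_{\mathrm{col}}(X^{I}) \perp \mathcal{L}_{\mathrm{col}}(X^{I^c})$, in which case $\|X - X W W^{+}\|_F \ge \|X - X^{I} (X^{I})^{+} X\|_F$ holds.
   Context: For a matrix $A$ and an index set $J$, $A_{J}$ denotes the submatrix of $A$ consisting of the rows indexed by $J$, and $A^{J}$ denotes the submatrix consisting of the columns indexed by $J$. $A^{+}$ denotes the Moore–Penrose pseudoinverse of $A$, $\|\cdot\|_F$ the Frobenius norm, and $\mathcal{L}_{\mathrm{col}}(A)$ the column space of $A$. Two subspaces are written $\perp$ when they are orthogonal. *)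

theory Defs
  imports "Jordan_Normal_Form.DL_Submatrix"
begin

text \<open>Moore-Penrose pseudoinverse, defined by the four Penrose conditions
  (it exists and is unique for every real matrix).\<close>
definition pinv :: "real mat \<Rightarrow> real mat" where
  "pinv A = (THE B. B \<in> carrier_mat (dim_col A) (dim_row A) \<and>
      A * B * A = A \<and> B * A * B = B \<and>
      transpose_mat (A * B) = A * B \<and> transpose_mat (B * A) = B * A)"

definition frob_norm :: "real mat \<Rightarrow> real" where
  "frob_norm A = sqrt (\<Sum>i<dim_row A. \<Sum>j<dim_col A. (A $$ (i,j))^2)"

definition col_space :: "real mat \<Rightarrow> real vec set" where
  "col_space A = {A *\<^sub>v x | x. x \<in> carrier_vec (dim_col A)}"

definition orth_subspaces :: "real vec set \<Rightarrow> real vec set \<Rightarrow> bool" where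
  "orth_subspaces S T \<longleftrightarrow> (\<forall>u\<in>S. \<forall>v\<in>T. u \<bullet> v = 0)"

text \<open>Column submatrix X^J (columns indexed by J, in increasing order).\<close>
definition cols_sub :: "real mat \<Rightarrow> nat set \<Rightarrow> real mat" where
  "cols_sub A J = submatrix A UNIV J"

end

theory Submission
  imports Defs
begin

definition outer :: "real vec \<Rightarrow> real vec \<Rightarrow> real mat" where
  "outer u v = mat (dim_vec u) (dim_vec v) (\<lambda>(i,j). u$i * v$j)"

lemma outer_carrier[simp]: "u \<in> carrier_vec m \<Longrightarrow> v \<in> carrier_vec n \<Longrightarrow> outer u v \<in> carrier_mat m n"
  unfolding outer_def by auto

lemma outer_index[simp]: "i < dim_vec u \<Longrightarrow> j < dim_vec v \<Longrightarrow> outer u v $$ (i,j) = u$i * v$j"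
  "dim_row (outer u v) = dim_vec u" "dim_col (outer u v) = dim_vec v"
  unfolding outer_def by auto

lemma mult_outer_left: assumes A: "A \<in> carrier_mat m n" and u: "u \<in> carrier_vec n"
  shows "A * outer u v = outer (A *\<^sub>v u) v"
proof (rule eq_matI)
  fix i j assume i: "i < dim_row (outer (A *\<^sub>v u) v)" and j: "j < dim_col (outer (A *\<^sub>v u) v)"
  have "(A * outer u v) $$ (i,j) = row A i \<bullet> col (outer u v) j" using i j A by auto
  also have "\<dots> = (\<Sum>k<n. A$$(i,k) * (u$k * v$j))"
    using i j A u unfolding scalar_prod_def by (auto intro!: sum.cong simp: lessThan_atLeast0)
  also have "\<dots> = (row A i \<bullet> u) * v$j"
    using i j A u unfolding scalar_prod_def by (auto simp: sum_distrib_left lessThan_atLeast0 ac_simps intro!: sum.cong)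
  finally show "(A * outer u v) $$ (i,j) = outer (A *\<^sub>v u) v $$ (i,j)" using i j A by auto
qed (insert A, auto)

lemma mult_outer_right: assumes A: "A \<in> carrier_mat n m" and v: "v \<in> carrier_vec n"
  shows "outer u v * A = outer u (transpose_mat A *\<^sub>v v)"
proof (rule eq_matI)
  fix i j assume i: "i < dim_row (outer u (transpose_mat A *\<^sub>v v))" and j: "j < dim_col (outer u (transpose_mat A *\<^sub>v v))"
  have "(outer u v * A) $$ (i,j) = row (outer u v) i \<bullet> col A j" using i j A v by auto
  also have "\<dots> = (\<Sum>k<n. (u$i * v$k) * A$$(k,j))"
    using i j A v unfolding scalar_prod_def by (auto intro!: sum.cong simp: lessThan_atLeast0)
  also have "\<dots> = u$i * (col A j \<bullet> v)"
    using i j A v unfolding scalar_prod_def by (auto simp: sum_distrib_left lessThan_atLeast0 ac_simps intro!: sum.cong)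
  finally show "(outer u v * A) $$ (i,j) = outer u (transpose_mat A *\<^sub>v v) $$ (i,j)" using i j A by auto
qed (insert A v, auto)

lemma outer_mult_vec: assumes v: "v \<in> carrier_vec n" and w: "w \<in> carrier_vec n"
  shows "outer u v *\<^sub>v w = (v \<bullet> w) \<cdot>\<^sub>v u"
  by (rule eq_vecI, insert v w, auto simp: scalar_prod_def sum_distrib_left ac_simps intro!: sum.cong)

lemma transpose_outer: "transpose_mat (outer u v) = outer v u"
  by (rule eq_matI, auto)

lemma outer_zero_left: "v \<in> carrier_vec n \<Longrightarrow> outer (0\<^sub>v m) v = 0\<^sub>m m n"
  by (rule eq_matI, auto)
lemma outer_zero_right: "u \<in> carrier_vec m \<Longrightarrow> outer u (0\<^sub>v n) = 0\<^sub>m m n"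
  by (rule eq_matI, auto)


lemma outer_smult_right: "outer u (k \<cdot>\<^sub>v v) = k \<cdot>\<^sub>m outer u v"
  by (rule eq_matI, auto)

lemma outer_outer: assumes v: "v \<in> carrier_vec n" and x: "x \<in> carrier_vec n" and y: "y \<in> carrier_vec p"
  shows "outer u v * outer x y = (v \<bullet> x) \<cdot>\<^sub>m outer u y"
proof -
  have "outer u v * outer x y = outer u (transpose_mat (outer x y) *\<^sub>v v)"
    by (rule mult_outer_right[OF outer_carrier[OF x y] v])
  also have "transpose_mat (outer x y) *\<^sub>v v = (x \<bullet> v) \<cdot>\<^sub>v y"
    unfolding transpose_outer by (rule outer_mult_vec[OF x v])
  also have "x \<bullet> v = v \<bullet> x" using comm_scalar_prod[OF x v] .
  finally show ?thesis by (simp add: outer_smult_right)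
qed

lemma transpose_smult_mat: "transpose_mat (k \<cdot>\<^sub>m A) = k \<cdot>\<^sub>m transpose_mat A"
  by (rule eq_matI, auto)

lemma self_scalar_prod_pos: fixes c :: "real vec"
  assumes c: "c \<in> carrier_vec m" and nz: "c \<noteq> 0\<^sub>v m" shows "c \<bullet> c > 0"
proof -
  have eq: "c \<bullet> c = (\<Sum>i\<in>{0..<m}. (c$i)^2)" using c unfolding scalar_prod_def by (simp add: power2_eq_square)
  obtain i where i: "i < m" "c$i \<noteq> 0" using nz c by (metis eq_vecI carrier_vecD index_zero_vec(1) index_zero_vec(2))
  have "0 < (c$i)^2" using i by simp
  also have "\<dots> \<le> (\<Sum>i\<in>{0..<m}. (c$i)^2)" using i by (intro member_le_sum) auto
  finally show ?thesis using eq by simp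
qed

lemma mult_unit_vec_col: fixes A :: "real mat" assumes A: "A \<in> carrier_mat m n" and k: "k < n"
  shows "A *\<^sub>v unit_vec n k = col A k"
proof (rule eq_vecI)
  fix i assume i: "i < dim_vec (col A k)"
  then have i': "i < dim_row A" by simp
  have "(A *\<^sub>v unit_vec n k) $ i = row A i \<bullet> unit_vec n k" using i' by simp
  also have "\<dots> = row A i $ k" by (rule scalar_prod_right_unit[OF k])
  finally show "(A *\<^sub>v unit_vec n k) $ i = col A k $ i" using i' k A by simp
qed (insert A, auto)

lemma g13_aux:
  fixes A :: "real mat"
  assumes A: "A \<in> carrier_mat m n"
  shows "k \<le> n \<Longrightarrow> \<exists>P B. B \<in> carrier_mat n m \<and> P = A * B \<and> transpose_mat P = P \<and> P * P = P
     \<and> (\<forall>j<k. P *\<^sub>v col A j = col A j)"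
proof (induction k)
  case 0
  show ?case
    by (rule exI[of _ "0\<^sub>m m m"], rule exI[of _ "0\<^sub>m n m"], insert A, auto)
next
  case (Suc k)
  then obtain P B where B: "B \<in> carrier_mat n m" and PAB: "P = A * B" and Psym: "transpose_mat P = P"
    and Pid: "P * P = P" and Pcol: "\<forall>j<k. P *\<^sub>v col A j = col A j" by auto
  have kn: "k < n" using Suc by auto
  have P: "P \<in> carrier_mat m m" using PAB A B by auto
  define a where "a = col A k"
  have a: "a \<in> carrier_vec m" unfolding a_def using A by auto
  define c where "c = a - P *\<^sub>v a"
  have c: "c \<in> carrier_vec m" unfolding c_def using a P by auto
  have Pc: "P *\<^sub>v c = 0\<^sub>v m"
  proof -
    have "P *\<^sub>v c = P *\<^sub>v a - P *\<^sub>v (P *\<^sub>v a)" unfolding c_def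
      by (rule mult_minus_distrib_mat_vec[OF P a], insert P a, auto)
    also have "P *\<^sub>v (P *\<^sub>v a) = P *\<^sub>v a" using assoc_mult_mat_vec[OF P P a] Pid by simp
    finally show ?thesis using P a by auto
  qed
  have cP: "c \<bullet> (P *\<^sub>v w) = 0" if w: "w \<in> carrier_vec m" for w
  proof -
    have "c \<bullet> (P *\<^sub>v w) = (transpose_mat P *\<^sub>v c) \<bullet> w"
      using transpose_vec_mult_scalar[OF P w c] by simp
    also have "\<dots> = 0" using Psym Pc w by simp
    finally show ?thesis .
  qed
  have ortho: "c \<bullet> col A j = 0" if j: "j < k" for j
  proof -
    have "col A j = P *\<^sub>v col A j" using Pcol j by simp
    then show ?thesis using cP[of "col A j"] A j kn by (metis col_carrier_vec carrier_matD(2) less_trans)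
  qed
  show ?case
  proof (cases "c = 0\<^sub>v m")
    case True
    have "P *\<^sub>v a = a"
    proof (rule eq_vecI)
      fix i assume i: "i < dim_vec a"
      have "c $ i = 0" using True a i by simp
      then show "(P *\<^sub>v a) $ i = a $ i" unfolding c_def using i a P by simp
    qed (insert a P, auto)
    then show ?thesis using B PAB Psym Pid Pcol unfolding a_def
      by (intro exI[of _ P] exI[of _ B]) (auto simp: less_Suc_eq)
  next
    case False
    define s where "s = c \<bullet> c"
    have s: "s > 0" unfolding s_def by (rule self_scalar_prod_pos[OF c False])
    define u where "u = unit_vec n k - B *\<^sub>v a"
    have u: "u \<in> carrier_vec n" unfolding u_def using B a by auto
    have Au: "A *\<^sub>v u = c"
    proof -
      have "A *\<^sub>v u = A *\<^sub>v unit_vec n k - A *\<^sub>v (B *\<^sub>v a)" unfolding u_def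
        by (rule mult_minus_distrib_mat_vec[OF A], insert B a, auto)
      also have "A *\<^sub>v unit_vec n k = a" unfolding a_def by (rule mult_unit_vec_col[OF A kn])
      also have "A *\<^sub>v (B *\<^sub>v a) = P *\<^sub>v a" using assoc_mult_mat_vec[OF A B a] PAB by simp
      finally show ?thesis unfolding c_def .
    qed
    define S where "S = (1/s) \<cdot>\<^sub>m outer c c"
    have S: "S \<in> carrier_mat m m" unfolding S_def using c by auto
    define P' where "P' = P + S"
    define B' where "B' = B + (1/s) \<cdot>\<^sub>m outer u c"
    have B': "B' \<in> carrier_mat n m" unfolding B'_def using B u c by auto
    have AB': "A * B' = P'"
    proof -
      have "A * B' = A * B + A * ((1/s) \<cdot>\<^sub>m outer u c)" unfolding B'_def
        by (rule mult_add_distrib_mat[OF A B], insert u c, auto)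
      also have "A * ((1/s) \<cdot>\<^sub>m outer u c) = (1/s) \<cdot>\<^sub>m (A * outer u c)"
        by (rule mult_smult_distrib[OF A], insert u c, auto)
      also have "A * outer u c = outer c c" using mult_outer_left[OF A u] Au by simp
      finally show ?thesis unfolding P'_def S_def PAB .
    qed
    have Ssym: "transpose_mat S = S" unfolding S_def transpose_smult_mat transpose_outer ..
    have P'sym: "transpose_mat P' = P'" unfolding P'_def using transpose_add[OF P S] Psym Ssym by simp
    have PS: "P * S = 0\<^sub>m m m"
    proof -
      have "P * S = (1/s) \<cdot>\<^sub>m (P * outer c c)" unfolding S_def by (rule mult_smult_distrib[OF P], insert c, auto)
      also have "P * outer c c = 0\<^sub>m m m" using mult_outer_left[OF P c] Pc outer_zero_left[OF c] by simp
      finally show ?thesis by simp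
    qed
    have SP: "S * P = 0\<^sub>m m m"
    proof -
      have "S * P = (1/s) \<cdot>\<^sub>m (outer c c * P)" unfolding S_def by (rule mult_smult_assoc_mat[OF _ P], insert c, auto)
      also have "outer c c * P = 0\<^sub>m m m" using mult_outer_right[OF P c] Pc Psym outer_zero_right[OF c] by simp
      finally show ?thesis by simp
    qed
    have SS: "S * S = S"
    proof -
      have "S * S = (1/s) \<cdot>\<^sub>m (outer c c * S)" unfolding S_def by (rule mult_smult_assoc_mat, insert c, auto)
      also have "outer c c * S = (1/s) \<cdot>\<^sub>m (outer c c * outer c c)" unfolding S_def by (rule mult_smult_distrib, insert c, auto)
      also have "outer c c * outer c c = s \<cdot>\<^sub>m outer c c" unfolding s_def by (rule outer_outer[OF c c c])
      finally show ?thesis using s unfolding S_def by (auto intro!: eq_matI)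
    qed
    have P'id: "P' * P' = P'"
    proof -
      have "P' * P' = P * P' + S * P'" unfolding P'_def by (rule add_mult_distrib_mat[OF P S], insert P S, auto)
      also have "P * P' = P * P + P * S" unfolding P'_def by (rule mult_add_distrib_mat[OF P P S])
      also have "S * P' = S * P + S * S" unfolding P'_def by (rule mult_add_distrib_mat[OF S P S])
      finally show ?thesis using Pid PS SP SS P S unfolding P'_def by simp
    qed
    have Svec: "S *\<^sub>v w = ((1/s) * (c \<bullet> w)) \<cdot>\<^sub>v c" if w: "w \<in> carrier_vec m" for w
      unfolding S_def using w c by (intro eq_vecI) (auto simp: scalar_prod_def sum_distrib_left ac_simps intro!: sum.cong)
    have P'col: "P' *\<^sub>v col A j = col A j" if j: "j < Suc k" for j
    proof -
      have cj: "col A j \<in> carrier_vec m" using A j kn by auto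
      have "P' *\<^sub>v col A j = P *\<^sub>v col A j + S *\<^sub>v col A j" unfolding P'_def
        by (rule add_mult_distrib_mat_vec[OF P S cj])
      also have "S *\<^sub>v col A j = ((1/s) * (c \<bullet> col A j)) \<cdot>\<^sub>v c" by (rule Svec[OF cj])
      finally have eq: "P' *\<^sub>v col A j = P *\<^sub>v col A j + ((1/s) * (c \<bullet> col A j)) \<cdot>\<^sub>v c" .
      show ?thesis
      proof (cases "j < k")
        case True
        have z: "col A j + 0 \<cdot>\<^sub>v c = col A j" using cj c A by (intro eq_vecI) auto
        show ?thesis using eq Pcol ortho[OF True] z True by simp
      next
        case False
        then have jk: "j = k" using j by simp
        have "a = c + P *\<^sub>v a" unfolding c_def using a P by (intro eq_vecI) auto
        then have "c \<bullet> a = c \<bullet> (c + P *\<^sub>v a)" by simp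
        also have "\<dots> = s + c \<bullet> (P *\<^sub>v a)" unfolding s_def by (rule scalar_prod_add_distrib[OF c c], insert P a, auto)
        also have "c \<bullet> (P *\<^sub>v a) = 0" by (rule cP[OF a])
        finally have ca: "c \<bullet> a = s" by simp
        have "P' *\<^sub>v a = P *\<^sub>v a + c" using eq[unfolded jk a_def[symmetric]] ca s by simp
        also have "\<dots> = a" unfolding c_def using a P by (intro eq_vecI) auto
        finally show ?thesis unfolding jk a_def .
      qed
    qed
    show ?thesis using B' AB' P'sym P'id P'col by (intro exI[of _ P'] exI[of _ B']) auto
  qed
qed

lemma g13: fixes A :: "real mat" assumes A: "A \<in> carrier_mat m n"
  shows "\<exists>B. B \<in> carrier_mat n m \<and> A * B * A = A \<and> transpose_mat (A * B) = A * B"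
proof -
  obtain P B where B: "B \<in> carrier_mat n m" and PAB: "P = A * B" and Psym: "transpose_mat P = P"
    and Pcol: "\<forall>j<n. P *\<^sub>v col A j = col A j" using g13_aux[OF A, of n] by blast
  have P: "P \<in> carrier_mat m m" using PAB A B by auto
  have "P * A = A"
  proof (rule eq_matI)
    fix i j assume i: "i < dim_row A" and j: "j < dim_col A"
    have "(P * A) $$ (i,j) = row P i \<bullet> col A j" using i j P A by simp
    also have "\<dots> = (P *\<^sub>v col A j) $ i" using i P A by simp
    also have "\<dots> = A $$ (i,j)" using Pcol i j A by simp
    finally show "(P * A) $$ (i,j) = A $$ (i,j)" .
  qed (insert P A, auto)
  then have "A * B * A = A" "transpose_mat (A * B) = A * B" using PAB Psym by auto
  then show ?thesis using B by blast
qed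

definition penrose :: "real mat \<Rightarrow> real mat \<Rightarrow> bool" where
  "penrose A G \<longleftrightarrow> A * G * A = A \<and> G * A * G = G \<and>
      transpose_mat (A * G) = A * G \<and> transpose_mat (G * A) = G * A"

lemma massoc: fixes A B C :: "real mat"
  assumes "dim_col A = dim_row B" "dim_col B = dim_row C" shows "A * B * C = A * (B * C)"
  using assoc_mult_mat[OF carrier_matI[OF refl refl] carrier_matI[OF assms(1)[symmetric] refl]
     carrier_matI[OF assms(2)[symmetric] refl]] .

lemma penrose_exists: fixes A :: "real mat" assumes A: "A \<in> carrier_mat m n"
  shows "\<exists>G. G \<in> carrier_mat n m \<and> penrose A G"
proof -
  obtain B where B: "B \<in> carrier_mat n m" and ABA: "A * B * A = A" and ABs: "transpose_mat (A * B) = A * B"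
    using g13[OF A] by auto
  have At: "transpose_mat A \<in> carrier_mat n m" using A by simp
  obtain C where C: "C \<in> carrier_mat m n" and ACA: "transpose_mat A * C * transpose_mat A = transpose_mat A"
    and ACs: "transpose_mat (transpose_mat A * C) = transpose_mat A * C"
    using g13[OF At] by auto
  define D where "D = transpose_mat C"
  have D: "D \<in> carrier_mat n m" unfolding D_def using C by simp
  have dm: "dim_row A = m" "dim_col A = n" "dim_row B = n" "dim_col B = m" "dim_row D = n" "dim_col D = m"
    "dim_row C = m" "dim_col C = n" using A B C D by auto
  have DA: "D * A = transpose_mat A * C"
    using ACs transpose_mult[OF At C] unfolding D_def by simp
  have DAs: "transpose_mat (D * A) = D * A" using DA ACs by simp
  have ADA: "A * D * A = A"
  proof -
    have "transpose_mat (transpose_mat A * C * transpose_mat A) = A * transpose_mat (transpose_mat A * C)"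
      using transpose_mult[of "transpose_mat A * C" n n "transpose_mat A" m] At C by simp
    also have "transpose_mat (transpose_mat A * C) = D * A" using DA DAs by simp
    finally have eq: "transpose_mat (transpose_mat A * C * transpose_mat A) = A * (D * A)" .
    have "A * (D * A) = A" using ACA eq[symmetric] by simp
    then show ?thesis using dm by (simp add: massoc)
  qed
  have ABA': "A * (B * A) = A" using ABA dm by (simp add: massoc)
  have ADA': "A * (D * A) = A" using ADA dm by (simp add: massoc)
  have ABAr: "A * (B * (A * X)) = A * X" if X: "dim_row X = n" for X
  proof -
    have "A * (B * (A * X)) = A * B * A * X" using dm X by (simp add: massoc)
    then show ?thesis unfolding ABA .
  qed
  have ADAr: "A * (D * (A * X)) = A * X" if X: "dim_row X = n" for X
  proof -
    have "A * (D * (A * X)) = A * D * A * X" using dm X by (simp add: massoc)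
    then show ?thesis unfolding ADA .
  qed
  define G where "G = D * A * B"
  have G: "G \<in> carrier_mat n m" unfolding G_def using D A B by simp
  have p1: "A * G * A = A" unfolding G_def using dm by (simp add: massoc ABAr ADAr ABA' ADA')
  have p2: "G * A * G = G" unfolding G_def using dm by (simp add: massoc ABAr ADAr ABA' ADA')
  have AG: "A * G = A * B" unfolding G_def using dm by (simp add: massoc ABAr ADAr ABA' ADA')
  have GA: "G * A = D * A" unfolding G_def using dm by (simp add: massoc ABAr ADAr ABA' ADA')
  have s3: "transpose_mat (A * G) = A * G" using AG ABs by simp
  have s4: "transpose_mat (G * A) = G * A" using GA DAs by simp
  show ?thesis unfolding penrose_def using G p1 p2 s3 s4 by blast
qed

lemma penrose_unique: fixes A :: "real mat" assumes A: "A \<in> carrier_mat m n"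
  and B: "B \<in> carrier_mat n m" and C: "C \<in> carrier_mat n m"
  and pB: "penrose A B" and pC: "penrose A C"
  shows "B = C"
proof -
  from pB have ABA: "A * B * A = A" and BAB: "B * A * B = B" and ABs: "transpose_mat (A * B) = A * B"
    and BAs: "transpose_mat (B * A) = B * A" unfolding penrose_def by auto
  from pC have ACA: "A * C * A = A" and CAC: "C * A * C = C" and ACs: "transpose_mat (A * C) = A * C"
    and CAs: "transpose_mat (C * A) = C * A" unfolding penrose_def by auto
  have dm: "dim_row A = m" "dim_col A = n" "dim_row B = n" "dim_col B = m" 
    "dim_row C = n" "dim_col C = m" using A B C by auto
  have AB: "A * B \<in> carrier_mat m m" and AC: "A * C \<in> carrier_mat m m" and BA: "B * A \<in> carrier_mat n n"
    and CA: "C * A \<in> carrier_mat n n" using A B C by auto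
  have tAt: "transpose_mat A = transpose_mat A * transpose_mat C * transpose_mat A"
  proof -
    have "transpose_mat A = transpose_mat (A * C * A)" using ACA by simp
    also have "\<dots> = transpose_mat A * transpose_mat (A * C)" using transpose_mult[OF AC A] by simp
    also have "transpose_mat (A * C) = transpose_mat C * transpose_mat A" using transpose_mult[OF A C] .
    also have "transpose_mat A * (transpose_mat C * transpose_mat A) = transpose_mat A * transpose_mat C * transpose_mat A"
      by (rule massoc[symmetric]) (simp_all add: dm)
    finally show ?thesis .
  qed
  have tAt2: "transpose_mat A = transpose_mat A * transpose_mat B * transpose_mat A"
  proof -
    have "transpose_mat A = transpose_mat (A * B * A)" using ABA by simp
    also have "\<dots> = transpose_mat A * transpose_mat (A * B)" using transpose_mult[OF AB A] by simp
    also have "transpose_mat (A * B) = transpose_mat B * transpose_mat A" using transpose_mult[OF A B] .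
    also have "transpose_mat A * (transpose_mat B * transpose_mat A) = transpose_mat A * transpose_mat B * transpose_mat A"
      by (rule massoc[symmetric]) (simp_all add: dm)
    finally show ?thesis .
  qed
  have e1: "B = B * A * C"
  proof -
    have "B = B * (A * B)" using BAB dm by (simp add: massoc)
    also have "\<dots> = B * (transpose_mat B * transpose_mat A)" using ABs transpose_mult[OF A B] by simp
    also have "\<dots> = B * (transpose_mat B * (transpose_mat A * transpose_mat C * transpose_mat A))"
      by (simp only: tAt[symmetric])
    also have "\<dots> = B * ((transpose_mat B * transpose_mat A) * (transpose_mat C * transpose_mat A))"
      using dm by (simp add: massoc)
    also have "\<dots> = B * (transpose_mat (A * B) * transpose_mat (A * C))"
      using transpose_mult[OF A B] transpose_mult[OF A C] by simp
    also have "\<dots> = B * (A * B * (A * C))" using ABs ACs by simp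
    also have "\<dots> = (B * A * B) * A * C" using dm by (simp add: massoc)
    finally have "B = (B * A * B) * A * C" .
    then show ?thesis unfolding BAB .
  qed
  have e2: "C = B * A * C"
  proof -
    have "C = (C * A) * C" using CAC by simp
    also have "\<dots> = (transpose_mat A * transpose_mat C) * C" using CAs transpose_mult[OF C A] by simp
    also have "\<dots> = ((transpose_mat A * transpose_mat B * transpose_mat A) * transpose_mat C) * C"
      by (simp only: tAt2[symmetric])
    also have "\<dots> = ((transpose_mat A * transpose_mat B) * (transpose_mat A * transpose_mat C)) * C"
      using dm by (simp add: massoc)
    also have "\<dots> = (transpose_mat (B * A) * transpose_mat (C * A)) * C"
      using transpose_mult[OF B A] transpose_mult[OF C A] by simp
    also have "\<dots> = B * A * (C * A * C)" using BAs CAs dm by (simp add: massoc)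
    finally have "C = B * A * (C * A * C)" .
    then show ?thesis unfolding CAC .
  qed
  show ?thesis using e1 e2 by simp
qed

lemma pinv_spec: fixes A :: "real mat" assumes A: "A \<in> carrier_mat m n"
  shows "pinv A \<in> carrier_mat n m" "A * pinv A * A = A" "pinv A * A * pinv A = pinv A"
    "transpose_mat (A * pinv A) = A * pinv A" "transpose_mat (pinv A * A) = pinv A * A"
proof -
  let ?Q = "\<lambda>B. B \<in> carrier_mat (dim_col A) (dim_row A) \<and>
      A * B * A = A \<and> B * A * B = B \<and>
      transpose_mat (A * B) = A * B \<and> transpose_mat (B * A) = B * A"
  have dims: "dim_col A = n" "dim_row A = m" using A by auto
  have "\<exists>!B. ?Q B"
  proof -
    obtain G where "G \<in> carrier_mat n m" "penrose A G" using penrose_exists[OF A] by auto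
    then have "?Q G" unfolding penrose_def dims by auto
    moreover have "B = G" if "?Q B" for B
      using penrose_unique[OF A _ \<open>G \<in> carrier_mat n m\<close> _ \<open>penrose A G\<close>, of B] that unfolding penrose_def dims by auto
    ultimately show ?thesis by blast
  qed
  then have "?Q (pinv A)" unfolding pinv_def by (rule theI')
  then show "pinv A \<in> carrier_mat n m" "A * pinv A * A = A" "pinv A * A * pinv A = pinv A"
    "transpose_mat (A * pinv A) = A * pinv A" "transpose_mat (pinv A * A) = pinv A * A"
    unfolding dims by auto
qed

lemma card_lt_set: "{j. j < p \<and> j \<in> K} = K" if "K \<subseteq> {0..<p}" for K :: "nat set"
  using that by auto

lemma cols_sub_carrier: fixes X :: "real mat"
  assumes X: "X \<in> carrier_mat n p" and K: "K \<subseteq> {0..<p}"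
  shows "cols_sub X K \<in> carrier_mat n (card K)"
proof -
  have "{i. i < n \<and> i \<in> (UNIV::nat set)} = {..<n}" by auto
  then show ?thesis using X card_lt_set[OF K] unfolding cols_sub_def by (auto simp: dim_submatrix)
qed

lemma cols_sub_index: fixes X :: "real mat"
  assumes X: "X \<in> carrier_mat n p" and K: "K \<subseteq> {0..<p}" and i: "i < n" and j: "j < card K"
  shows "cols_sub X K $$ (i,j) = X $$ (i, pick K j)"
proof -
  have "{i. i < n \<and> i \<in> (UNIV::nat set)} = {..<n}" by auto
  then have i': "i < card {i. i < dim_row X \<and> i \<in> UNIV}" using i X by auto
  have j': "j < card {j. j < dim_col X \<and> j \<in> K}" using j X card_lt_set[OF K] by auto
  show ?thesis unfolding cols_sub_def submatrix_index[OF i' j'] pick_UNIV ..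
qed

lemma pick_sub: assumes K: "K \<subseteq> {0..<p}" and j: "j < card K"
  shows "pick K j \<in> K" "pick K j < p"
  using pick_in_set[of j K] j K by auto

lemma mult_cols_sub: fixes X P :: "real mat"
  assumes X: "X \<in> carrier_mat n p" and K: "K \<subseteq> {0..<p}" and P: "P \<in> carrier_mat m n"
  and i: "i < m" and j: "j < card K"
  shows "(P * cols_sub X K) $$ (i,j) = (P * X) $$ (i, pick K j)"
proof -
  have XK: "cols_sub X K \<in> carrier_mat n (card K)" by (rule cols_sub_carrier[OF X K])
  have pj: "pick K j < p" using pick_sub[OF K j] by simp
  have "(P * cols_sub X K) $$ (i,j) = row P i \<bullet> col (cols_sub X K) j" using P XK i j by simp
  also have "col (cols_sub X K) j = col X (pick K j)"
    using XK X pj j by (intro eq_vecI) (auto simp: cols_sub_index[OF X K])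
  also have "row P i \<bullet> col X (pick K j) = (P * X) $$ (i, pick K j)" using P X i pj by simp
  finally show ?thesis .
qed

definition fsq :: "nat \<Rightarrow> nat \<Rightarrow> real mat \<Rightarrow> real" where
  "fsq n p A = (\<Sum>i<n. \<Sum>j<p. (A $$ (i,j))^2)"

lemma frob_fsq: "A \<in> carrier_mat n p \<Longrightarrow> frob_norm A = sqrt (fsq n p A)"
  unfolding frob_norm_def fsq_def by auto

lemma cross_term: fixes D P E :: "real mat"
  assumes D: "D \<in> carrier_mat n p" and P: "P \<in> carrier_mat n n" and E: "E \<in> carrier_mat n p"
  shows "(\<Sum>i<n. \<Sum>j<p. D $$ (i,j) * (P * E) $$ (i,j)) = (\<Sum>k<n. \<Sum>j<p. (transpose_mat P * D) $$ (k,j) * E $$ (k,j))"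
proof -
  have "(\<Sum>i<n. \<Sum>j<p. D $$ (i,j) * (P * E) $$ (i,j)) = (\<Sum>i<n. \<Sum>j<p. \<Sum>k<n. D $$ (i,j) * P $$ (i,k) * E $$ (k,j))"
    using D P E by (intro sum.cong refl) (auto simp: scalar_prod_def sum_distrib_left lessThan_atLeast0 ac_simps intro!: sum.cong)
  also have "\<dots> = (\<Sum>i<n. \<Sum>k<n. \<Sum>j<p. D $$ (i,j) * P $$ (i,k) * E $$ (k,j))"
    by (rule sum.cong[OF refl], rule sum.swap)
  also have "\<dots> = (\<Sum>k<n. \<Sum>i<n. \<Sum>j<p. D $$ (i,j) * P $$ (i,k) * E $$ (k,j))"
    by (rule sum.swap)
  also have "\<dots> = (\<Sum>k<n. \<Sum>j<p. \<Sum>i<n. D $$ (i,j) * P $$ (i,k) * E $$ (k,j))"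
    by (rule sum.cong[OF refl], rule sum.swap)
  also have "\<dots> = (\<Sum>k<n. \<Sum>j<p. (transpose_mat P * D) $$ (k,j) * E $$ (k,j))"
    using D P E by (intro sum.cong refl) (auto simp: scalar_prod_def sum_distrib_left sum_distrib_right lessThan_atLeast0 ac_simps intro!: sum.cong)
  finally show ?thesis .
qed

lemma fsq_decomp: fixes D F :: "real mat"
  assumes D: "D \<in> carrier_mat n p" and F: "F \<in> carrier_mat n p"
  and cross: "(\<Sum>i<n. \<Sum>j<p. D $$ (i,j) * F $$ (i,j)) = 0"
  shows "fsq n p (D + F) = fsq n p D + fsq n p F"
proof -
  have "fsq n p (D + F) = (\<Sum>i<n. \<Sum>j<p. (D $$ (i,j))^2 + (F $$ (i,j))^2 + 2 * (D $$ (i,j) * F $$ (i,j)))"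
    unfolding fsq_def using D F by (intro sum.cong refl) (auto simp: power2_eq_square algebra_simps)
  also have "\<dots> = fsq n p D + fsq n p F + 2 * (\<Sum>i<n. \<Sum>j<p. D $$ (i,j) * F $$ (i,j))"
    unfolding fsq_def by (simp add: sum.distrib sum_distrib_left)
  finally show ?thesis using cross by simp
qed

lemma fsq_nonneg: "fsq n p A \<ge> 0" unfolding fsq_def by (intro sum_nonneg) auto

lemma fsq_zero: assumes "fsq n p A = 0" "i < n" "j < p" shows "A $$ (i,j) = 0"
proof -
  have "\<forall>i\<in>{..<n}. (\<Sum>j<p. (A $$ (i,j))^2) = 0"
    using assms(1) unfolding fsq_def by (subst sum_nonneg_eq_0_iff[symmetric]) (auto intro!: sum_nonneg)
  then have "(\<Sum>j<p. (A $$ (i,j))^2) = 0" using assms by auto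
  then have "\<forall>j\<in>{..<p}. (A $$ (i,j))^2 = 0" by (subst sum_nonneg_eq_0_iff[symmetric]) auto
  then show ?thesis using assms by auto
qed


theorem theorem3:
  fixes X W :: "real mat" and n p :: nat and I :: "nat set"
  assumes X: "X \<in> carrier_mat n p"
    and W: "W \<in> carrier_mat p p"
    and I: "I \<subseteq> {0..<p}"
    and W_rows: "\<forall>i<p. i \<notin> I \<longrightarrow> (\<forall>j<p. W $$ (i,j) = 0)"
  shows "(\<not> orth_subspaces (col_space (cols_sub X I)) (col_space (cols_sub X ({0..<p} - I))) \<longrightarrow>
            frob_norm (X - X * W * pinv W) > frob_norm (X - cols_sub X I * pinv (cols_sub X I) * X))
       \<and> (orth_subspaces (col_space (cols_sub X I)) (col_space (cols_sub X ({0..<p} - I))) \<longrightarrow>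
            frob_norm (X - X * W * pinv W) \<ge> frob_norm (X - cols_sub X I * pinv (cols_sub X I) * X))"
proof -
  define J where "J = {0..<p} - I"
  have J: "J \<subseteq> {0..<p}" unfolding J_def by auto
  define XI where "XI = cols_sub X I"
  define XJ where "XJ = cols_sub X J"
  have XI: "XI \<in> carrier_mat n (card I)" unfolding XI_def by (rule cols_sub_carrier[OF X I])
  have XJ: "XJ \<in> carrier_mat n (card J)" unfolding XJ_def by (rule cols_sub_carrier[OF X J])
  define G where "G = pinv XI"
  have G: "G \<in> carrier_mat (card I) n" and XGX: "XI * G * XI = XI" and XGs: "transpose_mat (XI * G) = XI * G"
    using pinv_spec[OF XI] unfolding G_def by auto
  define P where "P = XI * G"
  have P: "P \<in> carrier_mat n n" unfolding P_def using XI G by simp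
  have Psym: "transpose_mat P = P" unfolding P_def by (rule XGs)
  have PXI: "P * XI = XI" unfolding P_def by (rule XGX)
  have dmI: "dim_row XI = n" "dim_col XI = card I" "dim_row G = card I" "dim_col G = n"
    "dim_row P = n" "dim_col P = n" "dim_row X = n" "dim_col X = p" using XI G P X by auto
  have Pid: "P * P = P"
  proof -
    have "XI * G * XI * G = P * P" unfolding P_def using dmI by (simp add: massoc)
    then show ?thesis unfolding XGX P_def by simp
  qed
  have finI: "finite I" using I finite_subset by blast
  have PXk: "(P * X) $$ (i,k) = X $$ (i,k)" if i: "i < n" and k: "k \<in> I" for i k
  proof -
    define j where "j = card {a\<in>I. a < k}"
    have "{a\<in>I. a < k} \<subset> I" using k by auto
    then have j: "j < card I" unfolding j_def by (rule psubset_card_mono[OF finI])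
    have pk: "pick I j = k" unfolding j_def by (rule pick_card_in_set[OF k])
    have "(P * XI) $$ (i,j) = (P * X) $$ (i, pick I j)" unfolding XI_def by (rule mult_cols_sub[OF X I P i j])
    then have "(P * X) $$ (i,k) = XI $$ (i,j)" using PXI pk by simp
    also have "\<dots> = X $$ (i, pick I j)" unfolding XI_def by (rule cols_sub_index[OF X I i j])
    finally show ?thesis using pk by simp
  qed
  define H where "H = pinv W"
  have H: "H \<in> carrier_mat p p" and WHs: "transpose_mat (W * H) = W * H"
    using pinv_spec[OF W] unfolding H_def by auto
  define Q where "Q = W * H"
  have Q: "Q \<in> carrier_mat p p" unfolding Q_def using W H by simp
  have Qrow: "Q $$ (j,l) = 0" if j: "j < p" "j \<notin> I" and l: "l < p" for j l
  proof -
    have "Q $$ (j,l) = row W j \<bullet> col H l" unfolding Q_def using W H j l by simp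
    also have "\<dots> = 0" using W H j l W_rows unfolding scalar_prod_def by auto
    finally show ?thesis .
  qed
  have Qcol: "Q $$ (l,j) = 0" if j: "j < p" "j \<notin> I" and l: "l < p" for j l
  proof -
    have "Q $$ (l,j) = transpose_mat Q $$ (j,l)" using Q j l by simp
    also have "transpose_mat Q = Q" unfolding Q_def by (rule WHs)
    finally show ?thesis using Qrow[OF j l] by simp
  qed
  define Y where "Y = X * W * pinv W"
  have YQ: "Y = X * Q" unfolding Y_def Q_def H_def[symmetric] using X W H by simp
  have Y: "Y \<in> carrier_mat n p" unfolding YQ using X Q by simp
  have PXW: "P * X * W = X * W"
  proof (rule eq_matI)
    fix i j assume i: "i < dim_row (X * W)" and j: "j < dim_col (X * W)"
    have i': "i < n" and j': "j < p" using i j X W by auto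
    have PXc: "P * X \<in> carrier_mat n p" using P X by simp
    have "(P * X * W) $$ (i,j) = row (P * X) i \<bullet> col W j"
      by (rule index_mult_mat(1), insert PXc W i' j', auto)
    also have "\<dots> = (\<Sum>k\<in>{0..<p}. (P * X) $$ (i,k) * W $$ (k,j))"
      using PXc W i' j' dmI by (auto simp: scalar_prod_def intro!: sum.cong)
    also have "\<dots> = (\<Sum>k\<in>{0..<p}. X $$ (i,k) * W $$ (k,j))"
    proof (rule sum.cong[OF refl])
      fix k assume k: "k \<in> {0..<p}"
      show "(P * X) $$ (i,k) * W $$ (k,j) = X $$ (i,k) * W $$ (k,j)"
      proof (cases "k \<in> I")
        case True then show ?thesis using PXk[OF i'] by simp
      next
        case False then show ?thesis using W_rows k j' by simp
      qed
    qed
    also have "\<dots> = (X * W) $$ (i,j)" using X W i' j' by (simp add: scalar_prod_def)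
    finally show "(P * X * W) $$ (i,j) = (X * W) $$ (i,j)" .
  qed (insert P X W, auto)
  have PY: "P * Y = Y"
  proof -
    have dmW: "dim_row W = p" "dim_col W = p" "dim_row H = p" "dim_col H = p" using W H by auto
    have "P * Y = P * X * W * pinv W" unfolding Y_def H_def[symmetric] using dmI dmW by (simp add: massoc)
    then show ?thesis unfolding PXW Y_def .
  qed
  have Yzero: "Y $$ (i,j) = 0" if i: "i < n" and j: "j < p" "j \<notin> I" for i j
  proof -
    have "Y $$ (i,j) = (\<Sum>l\<in>{0..<p}. X $$ (i,l) * Q $$ (l,j))"
      unfolding YQ using X Q i j by (simp add: scalar_prod_def)
    also have "\<dots> = 0" using Qcol[OF j] by simp
    finally show ?thesis .
  qed
  define D where "D = X - P * X"
  define F where "F = P * X - Y"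
  have D: "D \<in> carrier_mat n p" unfolding D_def using P X by (intro minus_carrier_mat) simp
  have F: "F \<in> carrier_mat n p" unfolding F_def using Y by (rule minus_carrier_mat)
  have XYc: "X - Y \<in> carrier_mat n p" using Y by (rule minus_carrier_mat)
  have EDF: "X - Y = D + F" unfolding D_def F_def using X P Y by (intro eq_matI) auto
  have FP: "F = P * (X - Y)"
  proof -
    have "P * (X - Y) = P * X - P * Y" by (rule mult_minus_distrib_mat[OF P X Y])
    then show ?thesis unfolding F_def PY by simp
  qed
  have PD: "transpose_mat P * D = 0\<^sub>m n p"
  proof -
    have "P * D = P * X - P * (P * X)" unfolding D_def by (rule mult_minus_distrib_mat[OF P X], insert P X, auto)
    also have "P * (P * X) = P * X" using Pid dmI by (simp add: massoc[symmetric])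
    finally show ?thesis unfolding Psym using P X by (intro eq_matI) auto
  qed
  have cross: "(\<Sum>i<n. \<Sum>j<p. D $$ (i,j) * F $$ (i,j)) = 0"
    unfolding FP cross_term[OF D P XYc] unfolding PD by simp
  have decomp: "fsq n p (X - Y) = fsq n p D + fsq n p F"
    unfolding EDF by (rule fsq_decomp[OF D F cross])
  have nE: "frob_norm (X - X * W * pinv W) = sqrt (fsq n p (X - Y))"
    unfolding Y_def[symmetric] by (rule frob_fsq[OF XYc])
  have nD: "frob_norm (X - cols_sub X I * pinv (cols_sub X I) * X) = sqrt (fsq n p D)"
    unfolding XI_def[symmetric] G_def[symmetric] P_def[symmetric] D_def[symmetric] by (rule frob_fsq[OF D])
  have ge: "frob_norm (X - X * W * pinv W) \<ge> frob_norm (X - cols_sub X I * pinv (cols_sub X I) * X)"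
    unfolding nE nD decomp using fsq_nonneg[of n p F] by simp
  have orth: "orth_subspaces (col_space (cols_sub X I)) (col_space (cols_sub X ({0..<p} - I)))"
    if eq: "\<not> frob_norm (X - X * W * pinv W) > frob_norm (X - cols_sub X I * pinv (cols_sub X I) * X)"
  proof -
    have "fsq n p (X - Y) = fsq n p D" using eq ge unfolding nE nD
      using fsq_nonneg[of n p D] fsq_nonneg[of n p "X - Y"] by simp
    then have F0: "fsq n p F = 0" using decomp by simp
    have PXJ0: "(P * X) $$ (i,j) = 0" if i: "i < n" and j: "j < p" "j \<notin> I" for i j
    proof -
      have "F $$ (i,j) = 0" using fsq_zero[OF F0 i j(1)] .
      then have "(P * X) $$ (i,j) = Y $$ (i,j)" unfolding F_def using P X Y i j by simp
      then show ?thesis using Yzero[OF i j] by simp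
    qed
    have PXJ: "P * XJ = 0\<^sub>m n (card J)"
    proof (rule eq_matI)
      fix i j assume i: "i < dim_row (0\<^sub>m n (card J))" and j: "j < dim_col (0\<^sub>m n (card J))"
      have i': "i < n" and j': "j < card J" using i j by auto
      have "(P * XJ) $$ (i,j) = (P * X) $$ (i, pick J j)" unfolding XJ_def by (rule mult_cols_sub[OF X J P i' j'])
      also have "\<dots> = 0" using PXJ0[OF i'] pick_sub[OF J j'] unfolding J_def by auto
      finally show "(P * XJ) $$ (i,j) = 0\<^sub>m n (card J) $$ (i,j)" using i' j' by simp
    qed (insert P XJ, auto)
    show ?thesis unfolding orth_subspaces_def col_space_def J_def[symmetric] XI_def[symmetric] XJ_def[symmetric]
    proof (intro ballI)
      fix u v assume u: "u \<in> {XI *\<^sub>v x |x. x \<in> carrier_vec (dim_col XI)}"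
        and v: "v \<in> {XJ *\<^sub>v x |x. x \<in> carrier_vec (dim_col XJ)}"
      obtain a where a: "a \<in> carrier_vec (card I)" and ua: "u = XI *\<^sub>v a" using u XI by auto
      obtain b where b: "b \<in> carrier_vec (card J)" and vb: "v = XJ *\<^sub>v b" using v XJ by auto
      have uc: "u \<in> carrier_vec n" and vc: "v \<in> carrier_vec n" using ua vb XI XJ a b by auto
      have Pu: "P *\<^sub>v u = u" unfolding ua using assoc_mult_mat_vec[OF P XI a, symmetric] PXI by simp
      have z0: "0\<^sub>m n (card J) *\<^sub>v b = 0\<^sub>v n" using b by (intro eq_vecI) (auto simp: scalar_prod_def)
      have Pv: "P *\<^sub>v v = 0\<^sub>v n" unfolding vb using assoc_mult_mat_vec[OF P XJ b, symmetric] PXJ z0 by simp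
      have "u \<bullet> v = (transpose_mat P *\<^sub>v u) \<bullet> v" unfolding Psym Pu ..
      also have "\<dots> = u \<bullet> (P *\<^sub>v v)" by (rule transpose_vec_mult_scalar[OF P vc uc])
      also have "\<dots> = 0" unfolding Pv using uc by simp
      finally show "u \<bullet> v = 0" .
    qed
  qed
  show ?thesis
  proof (intro conjI impI)
    assume "\<not> orth_subspaces (col_space (cols_sub X I)) (col_space (cols_sub X ({0..<p} - I)))"
    then show "frob_norm (X - X * W * pinv W) > frob_norm (X - cols_sub X I * pinv (cols_sub X I) * X)"
      using orth by blast
  next
    show "frob_norm (X - X * W * pinv W) \<ge> frob_norm (X - cols_sub X I * pinv (cols_sub X I) * X)"
      by (rule ge)
  qed
qed

end
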